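(* Let $\psi$ be a branching mechanism and $g$ the associated gauge function (see context). Let $c\in(0,\infty)$. Then there exists $r(c)\in(0,r_0)$, depending only on $c$, such that for all $r\in(0,r(c))$, $$g(r)\,\psi'^{-1}(c/r^2)\le 4r^2,$$ where $\psi'^{-1}$ is the inverse function of the derivative $\psi'$.
   Context: A branching mechanism is $\psi(\lambda)=\alpha\lambda+\beta\lambda^2+\int_{(0,\infty)}(e^{-\lambda r}-1+\lambda r)\pi(\mathrm{d}r)$, $\lambda\ge0$, with $\alpha,\beta\ge0$ and $\pi$ a Borel measure on $(0,\infty)$ with $\int(r\wedge r^2)\pi(\mathrm{d}r)<\infty$. Let $\varphi=\psi'\circ\psi^{-1}$, whose inverse $\varphi^{-1}$ is defined on $[\alpha,\infty)$. The gauge function is $g(r)=\log\log\frac1r\,/\,\varphi^{-1}\big((\frac1r\log\log\frac1r)^2\big)$ for $r\in(0,r_0)$, with $r_0=\min(\alpha^{-1/2},e^{-e})$ (and $\alpha^{-1/2}=\infty$ if $\alpha=0$). *)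

theory Defs
  imports "HOL-Analysis.Analysis"
begin

definition branching_mech :: "real \<Rightarrow> real \<Rightarrow> real measure \<Rightarrow> bool" where
  "branching_mech \<alpha> \<beta> \<pi> \<longleftrightarrow>
     \<alpha> \<ge> 0 \<and> \<beta> \<ge> 0 \<and> sets \<pi> = sets borel \<and> emeasure \<pi> {..0} = 0 \<and>
     integrable \<pi> (\<lambda>r. min r (r^2))"

definition psi :: "real \<Rightarrow> real \<Rightarrow> real measure \<Rightarrow> real \<Rightarrow> real" where
  "psi \<alpha> \<beta> \<pi> l = \<alpha> * l + \<beta> * l^2 + (\<integral>r. (exp (- l * r) - 1 + l * r) \<partial>\<pi>)"

definition psi_deriv :: "real \<Rightarrow> real \<Rightarrow> real measure \<Rightarrow> real \<Rightarrow> real" where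
  "psi_deriv \<alpha> \<beta> \<pi> l = (THE d. (psi \<alpha> \<beta> \<pi> has_real_derivative d) (at l within {0..}))"

definition psi_deriv_inv :: "real \<Rightarrow> real \<Rightarrow> real measure \<Rightarrow> real \<Rightarrow> real" where
  "psi_deriv_inv \<alpha> \<beta> \<pi> = inv_into {0..} (psi_deriv \<alpha> \<beta> \<pi>)"

definition phi :: "real \<Rightarrow> real \<Rightarrow> real measure \<Rightarrow> real \<Rightarrow> real" where
  "phi \<alpha> \<beta> \<pi> = psi_deriv \<alpha> \<beta> \<pi> \<circ> inv_into {0..} (psi \<alpha> \<beta> \<pi>)"

definition phi_inv :: "real \<Rightarrow> real \<Rightarrow> real measure \<Rightarrow> real \<Rightarrow> real" where
  "phi_inv \<alpha> \<beta> \<pi> = inv_into {0..} (phi \<alpha> \<beta> \<pi>)"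

definition gauge :: "real \<Rightarrow> real \<Rightarrow> real measure \<Rightarrow> real \<Rightarrow> real" where
  "gauge \<alpha> \<beta> \<pi> r = ln (ln (1 / r)) / phi_inv \<alpha> \<beta> \<pi> (((1 / r) * ln (ln (1 / r)))^2)"

text \<open>r_0 = min(alpha^{-1/2}, e^{-e}), with alpha^{-1/2} = \<infinity> if alpha = 0.\<close>
definition r0 :: "real \<Rightarrow> real" where
  "r0 \<alpha> = (if \<alpha> = 0 then exp (- exp 1) else min (1 / sqrt \<alpha>) (exp (- exp 1)))"

end

theory Submission
  imports Defs
begin

lemma E1:
  fixes d :: real assumes "d \<ge> 0"
  shows "0 \<le> exp (-d) - 1 + d" "exp (-d) - 1 + d \<le> d * min 1 d"
proof -
  have a: "1 + (-d) \<le> exp (-d)" by (rule exp_ge_add_one_self)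
  then show "0 \<le> exp (-d) - 1 + d" by simp
  have b: "exp (-d) \<le> 1" using assms by simp
  have "(1 + d) * (1 - d + d^2) \<le> exp d * (1 - d + d^2)"
  proof (rule mult_right_mono)
    show "1 + d \<le> exp d" by (rule exp_ge_add_one_self)
    have "0 \<le> (d - 1/2)^2" by simp
    moreover have "(d - 1/2)^2 = 1 - d + d^2 - 3/4" by (simp add: power2_eq_square field_simps)
    ultimately show "0 \<le> 1 - d + d^2" by linarith
  qed
  moreover have "(1 + d) * (1 - d + d^2) = 1 + d^3" by (simp add: algebra_simps power2_eq_square power3_eq_cube)
  moreover have "d^3 \<ge> 0" using assms by simp
  ultimately have "1 \<le> exp d * (1 - d + d^2)" by linarith
  then have c: "exp (-d) \<le> 1 - d + d^2"
    by (simp add: exp_minus field_simps)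
  show "exp (-d) - 1 + d \<le> d * min 1 d"
    using b c by (simp add: min_def power2_eq_square)
qed

lemma E2:
  fixes a b :: real assumes "a \<ge> 0" "b \<ge> 0"
  shows "\<bar>exp (-b) - exp (-a) + (b - a) * exp (-a)\<bar> \<le> \<bar>b - a\<bar> * min 1 \<bar>b - a\<bar>"
proof -
  have eq: "exp (-b) - exp (-a) + (b - a) * exp (-a) = exp (-a) * (exp (-(b-a)) - 1 + (b - a))"
    by (simp add: algebra_simps flip: exp_add)
  show ?thesis
  proof (cases "b \<ge> a")
    case True
    then have "b - a \<ge> 0" by simp
    note e = E1[OF this]
    have "0 < exp (-a)" "exp (-a) \<le> 1" using assms by auto
    then have "0 \<le> exp (-a) * (exp (-(b-a)) - 1 + (b - a))"
      "exp (-a) * (exp (-(b-a)) - 1 + (b - a)) \<le> exp (- (b - a)) - 1 + (b - a)"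
      using e by (auto intro: mult_nonneg_nonneg mult_left_le_one_le)
    then show ?thesis using e True eq by simp
  next
    case False
    define u where "u = a - b"
    have u: "u > 0" using False u_def by simp
    have eq2: "exp (-b) - exp (-a) + (b - a) * exp (-a) = exp (-b) * (1 - exp (-u) * (1 + u))"
      by (simp add: u_def algebra_simps flip: exp_add)
    have e1: "1 + u \<le> exp u" by (rule exp_ge_add_one_self)
    have e2: "1 + (-u) \<le> exp (-u)" by (rule exp_ge_add_one_self)
    have p0: "0 \<le> 1 - exp (-u) * (1 + u)"
      using e1 by (simp add: exp_minus field_simps)
    have p1: "1 - exp (-u) * (1 + u) \<le> u"
    proof -
      have "0 \<le> u * exp (-u)" using u by simp
      then show ?thesis using e2 by (simp add: algebra_simps)
    qed
    have "(1 - u) * (1 + u) \<le> exp (-u) * (1 + u)"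
      using e2 u by (intro mult_right_mono) auto
    then have p2: "1 - exp (-u) * (1 + u) \<le> u * u" by (simp add: algebra_simps)
    have bb: "0 < exp (-b)" "exp (-b) \<le> 1" using assms by auto
    have "0 \<le> exp (-b) * (1 - exp (-u) * (1 + u))" using bb p0 by simp
    moreover have "exp (-b) * (1 - exp (-u) * (1 + u)) \<le> 1 - exp (-u) * (1 + u)"
      using bb p0 by (simp add: mult_left_le_one_le)
    moreover have "\<bar>b - a\<bar> = u" using u u_def by simp
    ultimately show ?thesis using eq2 p1 p2 by (simp add: min_def)
  qed
qed

lemma E3:
  fixes a b :: real assumes "a \<ge> 0" "b \<ge> 0"
  shows "\<bar>exp (-a) - exp (-b)\<bar> \<le> min 1 \<bar>b - a\<bar>"
proof -
  have main: "\<bar>exp (-x) - exp (-y)\<bar> \<le> min 1 \<bar>y - x\<bar>" if "0 \<le> x" "x \<le> y" for x y :: real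
  proof -
    have eq: "exp (-x) - exp (-y) = exp (-x) * (1 - exp (-(y - x)))"
      by (simp add: algebra_simps flip: exp_add)
    have e2: "1 + (-(y-x)) \<le> exp (-(y-x))" by (rule exp_ge_add_one_self)
    have q: "0 \<le> 1 - exp (-(y - x))" "1 - exp (-(y - x)) \<le> 1" "1 - exp (-(y - x)) \<le> y - x"
      using that e2 by (auto simp del: minus_diff_eq)
    have xx: "0 < exp (-x)" "exp (-x) \<le> 1" using that by auto
    have "0 \<le> exp (-x) * (1 - exp (-(y - x)))" using xx q by simp
    moreover have "exp (-x) * (1 - exp (-(y - x))) \<le> 1 - exp (-(y - x))"
      using xx q by (simp add: mult_left_le_one_le)
    ultimately have p: "0 \<le> exp (-x) - exp (-y)" "exp (-x) - exp (-y) \<le> 1"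
      "exp (-x) - exp (-y) \<le> y - x" using eq q by linarith+
    then show ?thesis using that by (simp add: abs_of_nonneg)
  qed
  show ?thesis
  proof (cases "a \<le> b")
    case True then show ?thesis using main assms by auto
  next
    case False then show ?thesis using main[of b a] assms by (simp add: abs_minus_commute)
  qed
qed

lemma E4:
  fixes x t :: real assumes "x \<ge> 0" "t \<ge> 1"
  shows "1 - exp (- (t * x)) \<le> t * (1 - exp (-x))"
proof -
  define f where "f y = t * (1 - exp (-y)) - (1 - exp (- (t * y)))" for y
  have "f 0 \<le> f x"
  proof (rule DERIV_nonneg_imp_increasing_open[OF assms(1)])
    fix y assume y: "0 < y" "y < x"
    have "DERIV f y :> t * exp (-y) - t * exp (- (t * y))"
      unfolding f_def by (auto intro!: derivative_eq_intros)
    moreover have "exp (- (t * y)) \<le> exp (-y)" using y assms by simp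
    then have "t * exp (-y) - t * exp (- (t * y)) \<ge> 0" using assms by simp
    ultimately show "\<exists>d. DERIV f y :> d \<and> 0 \<le> d" by blast
  next
    show "continuous_on {0..x} f" unfolding f_def by (intro continuous_intros)
  qed
  then show ?thesis by (simp add: f_def)
qed

definition DD :: "real \<Rightarrow> real \<Rightarrow> real measure \<Rightarrow> real \<Rightarrow> real" where
  "DD \<alpha> \<beta> \<pi> l = \<alpha> + 2 * \<beta> * l + (\<integral>r. r * (1 - exp (- l * r)) \<partial>\<pi>)"

definition KK :: "real measure \<Rightarrow> real \<Rightarrow> real" where
  "KK \<pi> h = (\<integral>r. r * min 1 (\<bar>h\<bar> * r) \<partial>\<pi>)"

context
  fixes \<alpha> \<beta> :: real and \<pi> :: "real measure"
  assumes bm: "branching_mech \<alpha> \<beta> \<pi>"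
begin

lemma sets_pi: "sets \<pi> = sets borel" using bm by (simp add: branching_mech_def)
lemma space_pi: "space \<pi> = UNIV" using sets_eq_imp_space_eq[OF sets_pi] by simp
lemma al: "\<alpha> \<ge> 0" and be: "\<beta> \<ge> 0" using bm by (auto simp: branching_mech_def)

lemma meas_pi: "f \<in> borel_measurable borel \<Longrightarrow> f \<in> borel_measurable \<pi>"
  by (subst measurable_cong_sets[OF sets_pi refl]) simp

lemma AE_pos: "AE r in \<pi>. r > 0"
proof (rule AE_I')
  show "{..0::real} \<in> null_sets \<pi>" using bm sets_pi by (simp add: branching_mech_def null_sets_def)
  show "{x \<in> space \<pi>. \<not> 0 < x} \<subseteq> {..0}" by auto
qed

lemma int_bound:
  assumes "f \<in> borel_measurable borel" "C \<ge> 0" "\<And>r. r > 0 \<Longrightarrow> \<bar>f r\<bar> \<le> C * min r (r^2)"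
  shows "integrable \<pi> f"
proof (rule Bochner_Integration.integrable_bound[where f="\<lambda>r. C * min r (r^2)"])
  show "integrable \<pi> (\<lambda>r. C * min r (r^2))" using bm by (simp add: branching_mech_def)
  show "f \<in> borel_measurable \<pi>" by (rule meas_pi[OF assms(1)])
  show "AE x in \<pi>. norm (f x) \<le> norm (C * min x (x^2))"
    using AE_pos
  proof eventually_elim
    case (elim x)
    then have "\<bar>f x\<bar> \<le> C * min x (x^2)" by (rule assms(3))
    then show ?case using elim assms(2) by simp
  qed
qed

lemma min_eq: "r > 0 \<Longrightarrow> min r (r^2) = r * min 1 (r::real)"
  by (simp add: min_def power2_eq_square)

lemma intF: "l \<ge> 0 \<Longrightarrow> integrable \<pi> (\<lambda>r. exp (- l * r) - 1 + l * r)"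
proof (rule int_bound[where C = "l + l^2"])
  fix r :: real assume l: "l \<ge> 0" and r: "r > 0"
  have x: "l * r \<ge> 0" using l r by simp
  note e = E1[OF this]
  have "l * r * min 1 (l * r) \<le> (l + l^2) * min r (r^2)"
  proof (cases "r \<le> 1")
    case True
    then have m: "min r (r^2) = r^2" by (simp add: min_def power2_eq_square mult_left_le_one_le r)
    have "l * r * min 1 (l * r) \<le> (l * r) * (l * r)" using x by (intro mult_left_mono) auto
    also have "\<dots> = l^2 * r^2" by (simp add: power2_eq_square)
    also have "\<dots> \<le> (l + l^2) * r^2" using l by (intro mult_right_mono) auto
    finally show ?thesis using m by simp
  next
    case False
    then have m: "min r (r^2) = r" by (simp add: min_def power2_eq_square)
    have "l * r * min 1 (l * r) \<le> l * r" using x by (simp add: mult_left_le)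
    also have "\<dots> \<le> (l + l^2) * r" using l r by (intro mult_right_mono) auto
    finally show ?thesis using m by simp
  qed
  then show "\<bar>exp (- l * r) - 1 + l * r\<bar> \<le> (l + l^2) * min r (r^2)"
    using e by simp
qed (auto)

lemma intG: "l \<ge> 0 \<Longrightarrow> integrable \<pi> (\<lambda>r. r * (1 - exp (- l * r)))"
proof (rule int_bound[where C = "1 + l"])
  fix r :: real assume l: "l \<ge> 0" and r: "r > 0"
  have e: "\<bar>exp (-0) - exp (-(l*r))\<bar> \<le> min 1 \<bar>l*r - 0\<bar>" using l r by (intro E3) auto
  then have e1: "0 \<le> 1 - exp (- l * r)" "1 - exp (- l * r) \<le> 1" "1 - exp (- l * r) \<le> l * r"
    using l r by auto
  show "\<bar>r * (1 - exp (- l * r))\<bar> \<le> (1 + l) * min r (r^2)"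
  proof (cases "r \<le> 1")
    case True
    then have m: "min r (r^2) = r^2" by (simp add: min_def power2_eq_square mult_left_le_one_le r)
    have "\<bar>r * (1 - exp (- l * r))\<bar> = r * (1 - exp (- l * r))" using e1 r by simp
    also have "\<dots> \<le> r * (l * r)" using e1 r by (intro mult_left_mono) auto
    also have "\<dots> = l * r^2" by (simp add: power2_eq_square)
    also have "\<dots> \<le> (1 + l) * r^2" by (intro mult_right_mono) auto
    finally show ?thesis using m by simp
  next
    case False
    then have m: "min r (r^2) = r" by (simp add: min_def power2_eq_square)
    have "\<bar>r * (1 - exp (- l * r))\<bar> = r * (1 - exp (- l * r))" using e1 r by simp
    also have "\<dots> \<le> r * 1" using e1 r by (intro mult_left_mono) auto
    also have "\<dots> \<le> (1 + l) * r" using l r by simp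
    finally show ?thesis using m by simp
  qed
qed (auto)

lemma intK: "integrable \<pi> (\<lambda>r. r * min 1 (\<bar>h\<bar> * r))"
proof (rule int_bound[where C = "1 + \<bar>h\<bar>"])
  fix r :: real assume r: "r > 0"
  have h0: "0 \<le> min 1 (\<bar>h\<bar> * r)" using r by simp
  show "\<bar>r * min 1 (\<bar>h\<bar> * r)\<bar> \<le> (1 + \<bar>h\<bar>) * min r (r^2)"
  proof (cases "r \<le> 1")
    case True
    then have m: "min r (r^2) = r^2" by (simp add: min_def power2_eq_square mult_left_le_one_le r)
    have "\<bar>r * min 1 (\<bar>h\<bar> * r)\<bar> = r * min 1 (\<bar>h\<bar> * r)" using h0 r by simp
    also have "\<dots> \<le> r * (\<bar>h\<bar> * r)" using r by (intro mult_left_mono) auto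
    also have "\<dots> = \<bar>h\<bar> * r^2" by (simp add: power2_eq_square)
    also have "\<dots> \<le> (1 + \<bar>h\<bar>) * r^2" by (intro mult_right_mono) auto
    finally show ?thesis using m by simp
  next
    case False
    then have m: "min r (r^2) = r" by (simp add: min_def power2_eq_square)
    have "\<bar>r * min 1 (\<bar>h\<bar> * r)\<bar> = r * min 1 (\<bar>h\<bar> * r)" using h0 r by simp
    also have "\<dots> \<le> r * 1" using r by (intro mult_left_mono) auto
    also have "\<dots> \<le> (1 + \<bar>h\<bar>) * r" using r by simp
    finally show ?thesis using m by simp
  qed
qed (auto)

lemma KK_nonneg: "KK \<pi> h \<ge> 0"
  unfolding KK_def by (rule integral_nonneg_AE) (use AE_pos in \<open>auto elim!: eventually_mono\<close>)

lemma KK_small: "e > 0 \<Longrightarrow> \<exists>d>0. \<forall>h. \<bar>h\<bar> < d \<longrightarrow> KK \<pi> h < e"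
proof -
  assume e: "e > 0"
  define s where "s t r = r * min 1 (\<bar>1 / t\<bar> * r)" for t r :: real
  have lim: "((\<lambda>t. integral\<^sup>L \<pi> (s t)) \<longlongrightarrow> integral\<^sup>L \<pi> (\<lambda>r. 0)) at_top"
  proof (rule integral_dominated_convergence_at_top[where w = "\<lambda>r. min r (r^2)"])
    show "(\<lambda>r. 0::real) \<in> borel_measurable \<pi>" by simp
    show "s t \<in> borel_measurable \<pi>" for t unfolding s_def by (intro meas_pi) measurable
    show "integrable \<pi> (\<lambda>r. min r (r^2))" using bm by (simp add: branching_mech_def)
    show "AE x in \<pi>. ((\<lambda>i. s i x) \<longlongrightarrow> 0) at_top"
    proof (rule AE_I2)
      fix x :: real
      have "((\<lambda>t::real. \<bar>1 / t\<bar>) \<longlongrightarrow> 0) at_top" unfolding tendsto_rabs_zero_iff by (rule tendsto_divide_0[OF tendsto_const filterlim_at_top_imp_at_infinity[OF filterlim_ident]])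
      then have "((\<lambda>t. \<bar>1 / t\<bar> * x) \<longlongrightarrow> 0 * x) at_top"
        by (rule tendsto_mult[OF _ tendsto_const])
      then have "((\<lambda>t. x * min 1 (\<bar>1 / t\<bar> * x)) \<longlongrightarrow> x * min 1 (0 * x)) at_top"
        by (rule tendsto_mult[OF tendsto_const tendsto_min[OF tendsto_const]])
      then show "((\<lambda>i. s i x) \<longlongrightarrow> 0) at_top" by (simp add: s_def)
    qed
    show "\<forall>\<^sub>F i in at_top. AE x in \<pi>. norm (s i x) \<le> min x (x^2)"
    proof (rule eventually_mono[OF eventually_ge_at_top[of 1]])
      fix t :: real assume t: "1 \<le> t"
      show "AE x in \<pi>. norm (s t x) \<le> min x (x^2)"
        using AE_pos
      proof eventually_elim
        case (elim x)
        have a: "\<bar>1 / t\<bar> * x \<le> x" using t elim by (simp add: divide_le_eq)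
        have "0 \<le> min 1 (\<bar>1 / t\<bar> * x)" using elim t by simp
        then have "norm (s t x) = x * min 1 (\<bar>1 / t\<bar> * x)" using elim by (simp add: s_def)
        also have "\<dots> \<le> x * min 1 x" using a elim by (intro mult_left_mono) auto
        also have "\<dots> = min x (x^2)" using min_eq[OF elim] by simp
        finally show ?case .
      qed
    qed
  qed
  then have "eventually (\<lambda>t. integral\<^sup>L \<pi> (s t) < e) at_top"
    using e by (auto simp: order_tendstoD)
  then obtain T where T: "\<And>t. t \<ge> T \<Longrightarrow> integral\<^sup>L \<pi> (s t) < e"
    by (auto simp: eventually_at_top_linorder)
  define t where "t = max T 1"
  have t: "t \<ge> T" "t \<ge> 1" by (auto simp: t_def)
  show ?thesis
  proof (intro exI[of _ "1 / t"] conjI allI impI)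
    show "0 < 1 / t" using t by simp
    fix h assume h: "\<bar>h\<bar> < 1 / t"
    have "KK \<pi> h \<le> integral\<^sup>L \<pi> (s t)"
      unfolding KK_def
    proof (rule integral_mono_AE')
      show "integrable \<pi> (s t)" unfolding s_def by (rule intK)
      show "AE x in \<pi>. x * min 1 (\<bar>h\<bar> * x) \<le> s t x"
        using AE_pos
      proof eventually_elim
        case (elim x)
        have "\<bar>h\<bar> * x \<le> \<bar>1 / t\<bar> * x" using h elim t by (intro mult_right_mono) auto
        then show ?case using elim unfolding s_def by (intro mult_left_mono) auto
      qed
      show "AE x in \<pi>. 0 \<le> s t x" using AE_pos by eventually_elim (use t in \<open>auto simp: s_def\<close>)
    qed
    then show "KK \<pi> h < e" using T[OF t(1)] by simp
  qed
qed

end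

context
  fixes \<alpha> \<beta> :: real and \<pi> :: "real measure"
  assumes bm: "branching_mech \<alpha> \<beta> \<pi>"
begin

lemma I_bound:
  assumes l: "l \<ge> 0" and y: "y \<ge> 0"
  shows "\<bar>(\<integral>r. exp (- y * r) - 1 + y * r \<partial>\<pi>) - (\<integral>r. exp (- l * r) - 1 + l * r \<partial>\<pi>)
          - (y - l) * (\<integral>r. r * (1 - exp (- l * r)) \<partial>\<pi>)\<bar> \<le> \<bar>y - l\<bar> * KK \<pi> (y - l)"
proof -
  define f where "f r = (exp (- y * r) - 1 + y * r) - (exp (- l * r) - 1 + l * r) - (y - l) * (r * (1 - exp (- l * r)))" for r
  have iF: "integrable \<pi> (\<lambda>r. exp (- y * r) - 1 + y * r)" "integrable \<pi> (\<lambda>r. exp (- l * r) - 1 + l * r)"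
    using intF[OF bm] l y by auto
  have iG: "integrable \<pi> (\<lambda>r. r * (1 - exp (- l * r)))" using intG[OF bm] l by auto
  have eq: "(\<integral>r. exp (- y * r) - 1 + y * r \<partial>\<pi>) - (\<integral>r. exp (- l * r) - 1 + l * r \<partial>\<pi>)
          - (y - l) * (\<integral>r. r * (1 - exp (- l * r)) \<partial>\<pi>) = (\<integral>r. f r \<partial>\<pi>)"
    unfolding f_def
    by (subst Bochner_Integration.integral_diff[OF Bochner_Integration.integrable_diff[OF iF] Bochner_Integration.integrable_mult_right[OF iG]],
        subst Bochner_Integration.integral_diff[OF iF], simp)
  have "\<bar>\<integral>r. f r \<partial>\<pi>\<bar> \<le> (\<integral>r. \<bar>f r\<bar> \<partial>\<pi>)" by (rule integral_abs_bound)
  also have "\<dots> \<le> (\<integral>r. \<bar>y - l\<bar> * (r * min 1 (\<bar>y - l\<bar> * r)) \<partial>\<pi>)"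
  proof (rule integral_mono_AE')
    show "integrable \<pi> (\<lambda>r. \<bar>y - l\<bar> * (r * min 1 (\<bar>y - l\<bar> * r)))"
      using intK[OF bm] by simp
    show "AE r in \<pi>. \<bar>f r\<bar> \<le> \<bar>y - l\<bar> * (r * min 1 (\<bar>y - l\<bar> * r))"
      using AE_pos[OF bm]
    proof eventually_elim
      case (elim r)
      have "\<bar>exp (-(y*r)) - exp (-(l*r)) + (y*r - l*r) * exp (-(l*r))\<bar>
             \<le> \<bar>y*r - l*r\<bar> * min 1 \<bar>y*r - l*r\<bar>"
        using l y elim by (intro E2) auto
      moreover have "f r = exp (-(y*r)) - exp (-(l*r)) + (y*r - l*r) * exp (-(l*r))"
        unfolding f_def by (simp add: algebra_simps)
      moreover have "\<bar>y*r - l*r\<bar> = \<bar>y - l\<bar> * r"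
      proof -
        have "y*r - l*r = (y - l) * r" by (simp add: algebra_simps)
        then show ?thesis using elim by (simp add: abs_mult)
      qed
      ultimately show ?case by (simp add: mult.assoc)
    qed
    show "AE r in \<pi>. 0 \<le> \<bar>y - l\<bar> * (r * min 1 (\<bar>y - l\<bar> * r))"
      using AE_pos[OF bm] by eventually_elim simp
  qed
  also have "\<dots> = \<bar>y - l\<bar> * KK \<pi> (y - l)" unfolding KK_def by simp
  finally show ?thesis using eq by simp
qed

lemma I_deriv:
  assumes l: "l \<ge> 0"
  shows "((\<lambda>y. \<integral>r. exp (- y * r) - 1 + y * r \<partial>\<pi>) has_real_derivative
           (\<integral>r. r * (1 - exp (- l * r)) \<partial>\<pi>)) (at l within {0..})"
proof -
  define Ii where "Ii y = (\<integral>r. exp (- y * r) - 1 + y * r \<partial>\<pi>)" for y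
  define J where "J = (\<integral>r. r * (1 - exp (- l * r)) \<partial>\<pi>)"
  have "((\<lambda>y. (Ii y - Ii l) / (y - l)) \<longlongrightarrow> J) (at l within {0..})"
    unfolding tendsto_iff
  proof (intro allI impI)
    fix e :: real assume e: "e > 0"
    obtain d where d: "d > 0" "\<And>h. \<bar>h\<bar> < d \<Longrightarrow> KK \<pi> h < e" using KK_small[OF bm e] by blast
    show "\<forall>\<^sub>F y in at l within {0..}. dist ((Ii y - Ii l) / (y - l)) J < e"
      unfolding eventually_at
    proof (intro exI[of _ d] conjI ballI impI)
      show "d > 0" by fact
      fix y :: real assume y: "y \<in> {0..}" and yl: "y \<noteq> l \<and> dist y l < d"
      define A where "A = Ii y - Ii l"
      have b: "\<bar>A - (y - l) * J\<bar> \<le> \<bar>y - l\<bar> * KK \<pi> (y - l)"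
        using I_bound[OF l] y unfolding A_def J_def Ii_def by auto
      have ne: "y - l \<noteq> 0" using yl by simp
      have "A / (y - l) - J = (A - (y - l) * J) / (y - l)" using ne by (simp add: field_simps)
      then have "\<bar>A / (y - l) - J\<bar> = \<bar>A - (y - l) * J\<bar> / \<bar>y - l\<bar>" by simp
      also have "\<dots> \<le> KK \<pi> (y - l)" using b ne by (simp add: divide_le_eq mult.commute)
      also have "\<dots> < e" using d yl by (simp add: dist_real_def)
      finally show "dist ((Ii y - Ii l) / (y - l)) J < e"
        unfolding A_def dist_real_def by simp
    qed
  qed
  then show ?thesis unfolding has_field_derivative_iff Ii_def J_def .
qed

lemma G_bound:
  assumes l: "l \<ge> 0" and y: "y \<ge> 0"
  shows "\<bar>(\<integral>r. r * (1 - exp (- y * r)) \<partial>\<pi>) - (\<integral>r. r * (1 - exp (- l * r)) \<partial>\<pi>)\<bar> \<le> KK \<pi> (y - l)"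
proof -
  have iG: "integrable \<pi> (\<lambda>r. r * (1 - exp (- l * r)))" "integrable \<pi> (\<lambda>r. r * (1 - exp (- y * r)))"
    using intG[OF bm] l y by auto
  have eq: "(\<integral>r. r * (1 - exp (- y * r)) \<partial>\<pi>) - (\<integral>r. r * (1 - exp (- l * r)) \<partial>\<pi>)
      = (\<integral>r. r * (1 - exp (- y * r)) - r * (1 - exp (- l * r)) \<partial>\<pi>)"
    by (rule Bochner_Integration.integral_diff[OF iG(2) iG(1), symmetric])
  have "\<bar>\<integral>r. r * (1 - exp (- y * r)) - r * (1 - exp (- l * r)) \<partial>\<pi>\<bar>
      \<le> (\<integral>r. \<bar>r * (1 - exp (- y * r)) - r * (1 - exp (- l * r))\<bar> \<partial>\<pi>)" by (rule integral_abs_bound)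
  also have "\<dots> \<le> KK \<pi> (y - l)" unfolding KK_def
  proof (rule integral_mono_AE')
    show "integrable \<pi> (\<lambda>r. r * min 1 (\<bar>y - l\<bar> * r))" using intK[OF bm] by simp
    show "AE r in \<pi>. \<bar>r * (1 - exp (- y * r)) - r * (1 - exp (- l * r))\<bar> \<le> r * min 1 (\<bar>y - l\<bar> * r)"
      using AE_pos[OF bm]
    proof eventually_elim
      case (elim r)
      have "\<bar>exp (-(l*r)) - exp (-(y*r))\<bar> \<le> min 1 \<bar>y*r - l*r\<bar>"
        using l y elim by (intro E3) auto
      moreover have "\<bar>y*r - l*r\<bar> = \<bar>y - l\<bar> * r"
      proof -
        have "y*r - l*r = (y - l) * r" by (simp add: algebra_simps)
        then show ?thesis using elim by (simp add: abs_mult)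
      qed
      moreover have "\<bar>r * (1 - exp (- y * r)) - r * (1 - exp (- l * r))\<bar> = r * \<bar>exp (-(l*r)) - exp (-(y*r))\<bar>"
      proof -
        have "r * (1 - exp (- y * r)) - r * (1 - exp (- l * r)) = r * (exp (-(l*r)) - exp (-(y*r)))"
          by (simp add: algebra_simps)
        then show ?thesis using elim by (simp add: abs_mult)
      qed
      ultimately show ?case using elim by (simp add: mult_left_mono)
    qed
    show "AE r in \<pi>. 0 \<le> r * min 1 (\<bar>y - l\<bar> * r)"
      using AE_pos[OF bm] by eventually_elim simp
  qed
  finally show ?thesis using eq by simp
qed

end

context
  fixes \<alpha> \<beta> :: real and \<pi> :: "real measure"
  assumes bm: "branching_mech \<alpha> \<beta> \<pi>"
begin

lemma psi_eq: "psi \<alpha> \<beta> \<pi> = (\<lambda>x. (\<alpha> * x + \<beta> * x^2) + (\<integral>r. exp (- x * r) - 1 + x * r \<partial>\<pi>))"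
  by (rule ext) (simp add: psi_def)

lemma psi_has_deriv:
  assumes l: "l \<ge> 0"
  shows "(psi \<alpha> \<beta> \<pi> has_real_derivative DD \<alpha> \<beta> \<pi> l) (at l within {0..})"
proof -
  have 1: "((\<lambda>x. \<alpha> * x + \<beta> * x^2) has_real_derivative \<alpha> + 2 * \<beta> * l) (at l within {0..})"
    by (auto intro!: derivative_eq_intros)
  have "((\<lambda>x. (\<alpha> * x + \<beta> * x^2) + (\<integral>r. exp (- x * r) - 1 + x * r \<partial>\<pi>)) has_real_derivative
      (\<alpha> + 2 * \<beta> * l) + (\<integral>r. r * (1 - exp (- l * r)) \<partial>\<pi>)) (at l within {0..})"
    by (rule DERIV_add[OF 1 I_deriv[OF bm l]])
  then show ?thesis unfolding psi_eq DD_def .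
qed

lemma psi_deriv_eq:
  assumes l: "l \<ge> 0"
  shows "psi_deriv \<alpha> \<beta> \<pi> l = DD \<alpha> \<beta> \<pi> l"
proof -
  have nb: "at l within {0..} \<noteq> bot"
  proof -
    have "l \<in> closure {l<..}" by simp
    moreover have "closure {l<..} \<subseteq> closure ({0..} - {l})" using l by (intro closure_mono) auto
    ultimately show ?thesis by (subst at_within_eq_bot_iff) auto
  qed
  show ?thesis unfolding psi_deriv_def
  proof (rule the_equality)
    show "(psi \<alpha> \<beta> \<pi> has_real_derivative DD \<alpha> \<beta> \<pi> l) (at l within {0..})" by (rule psi_has_deriv[OF l])
    fix d assume "(psi \<alpha> \<beta> \<pi> has_real_derivative d) (at l within {0..})"
    then show "d = DD \<alpha> \<beta> \<pi> l" using psi_has_deriv[OF l] nb by (rule has_field_derivative_unique)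
  qed
qed

lemma DD0: "DD \<alpha> \<beta> \<pi> 0 = \<alpha>" by (simp add: DD_def)
lemma psi0: "psi \<alpha> \<beta> \<pi> 0 = 0" by (simp add: psi_def)

lemma DD_cont: "continuous_on {0..} (DD \<alpha> \<beta> \<pi>)"
  unfolding continuous_on_iff
proof (intro ballI allI impI)
  fix l e :: real assume l: "l \<in> {0..}" and e: "e > 0"
  obtain d1 where d1: "d1 > 0" "\<And>h. \<bar>h\<bar> < d1 \<Longrightarrow> KK \<pi> h < e / 2" using KK_small[OF bm, of "e/2"] e by auto
  define d where "d = min d1 (e / (2 * (2 * \<beta> + 1)))"
  have b: "\<beta> \<ge> 0" using be[OF bm] .
  have dpos: "d > 0" using d1 e b by (simp add: d_def)
  show "\<exists>d>0. \<forall>y\<in>{0..}. dist y l < d \<longrightarrow> dist (DD \<alpha> \<beta> \<pi> y) (DD \<alpha> \<beta> \<pi> l) < e"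
  proof (intro exI[of _ d] conjI ballI impI dpos)
    fix y :: real assume y: "y \<in> {0..}" and yl: "dist y l < d"
    have g: "\<bar>(\<integral>r. r * (1 - exp (- y * r)) \<partial>\<pi>) - (\<integral>r. r * (1 - exp (- l * r)) \<partial>\<pi>)\<bar> \<le> KK \<pi> (y - l)"
      using G_bound[OF bm] l y by auto
    have k: "KK \<pi> (y - l) < e / 2" using d1 yl by (auto simp: d_def dist_real_def)
    have "\<bar>y - l\<bar> < e / (2 * (2 * \<beta> + 1))" using yl by (auto simp: d_def dist_real_def)
    then have "(2 * \<beta> + 1) * \<bar>y - l\<bar> < e / 2" using b by (simp add: field_simps)
    moreover have "(2 * \<beta> + 1) * \<bar>y - l\<bar> = 2 * \<beta> * \<bar>y - l\<bar> + \<bar>y - l\<bar>" by (simp add: algebra_simps)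
    ultimately have t: "2 * \<beta> * \<bar>y - l\<bar> < e / 2" using abs_ge_zero[of "y - l"] by linarith
    have "DD \<alpha> \<beta> \<pi> y - DD \<alpha> \<beta> \<pi> l = 2 * \<beta> * (y - l) + ((\<integral>r. r * (1 - exp (- y * r)) \<partial>\<pi>) - (\<integral>r. r * (1 - exp (- l * r)) \<partial>\<pi>))"
      by (simp add: DD_def algebra_simps)
    then have "\<bar>DD \<alpha> \<beta> \<pi> y - DD \<alpha> \<beta> \<pi> l\<bar> \<le> \<bar>2 * \<beta> * (y - l)\<bar> + \<bar>(\<integral>r. r * (1 - exp (- y * r)) \<partial>\<pi>) - (\<integral>r. r * (1 - exp (- l * r)) \<partial>\<pi>)\<bar>"
      by (simp only: abs_triangle_ineq)
    moreover have "\<bar>2 * \<beta> * (y - l)\<bar> = 2 * \<beta> * \<bar>y - l\<bar>" using b by (simp add: abs_mult)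
    ultimately have "\<bar>DD \<alpha> \<beta> \<pi> y - DD \<alpha> \<beta> \<pi> l\<bar> \<le> 2 * \<beta> * \<bar>y - l\<bar> + KK \<pi> (y - l)"
      using g by linarith
    then show "dist (DD \<alpha> \<beta> \<pi> y) (DD \<alpha> \<beta> \<pi> l) < e" using t k by (simp add: dist_real_def)
  qed
qed

lemma DD_sub:
  assumes l: "l \<ge> 0" and t: "t \<ge> 1"
  shows "DD \<alpha> \<beta> \<pi> (t * l) \<le> t * DD \<alpha> \<beta> \<pi> l"
proof -
  have tl: "t * l \<ge> 0" using l t by simp
  have "(\<integral>r. r * (1 - exp (- (t * l) * r)) \<partial>\<pi>) \<le> (\<integral>r. t * (r * (1 - exp (- l * r))) \<partial>\<pi>)"
  proof (rule integral_mono_AE)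
    show "integrable \<pi> (\<lambda>r. r * (1 - exp (- (t * l) * r)))" using intG[OF bm tl] .
    show "integrable \<pi> (\<lambda>r. t * (r * (1 - exp (- l * r))))" using intG[OF bm l] by simp
    show "AE r in \<pi>. r * (1 - exp (- (t * l) * r)) \<le> t * (r * (1 - exp (- l * r)))"
      using AE_pos[OF bm]
    proof eventually_elim
      case (elim r)
      have "1 - exp (- (t * (l * r))) \<le> t * (1 - exp (- (l * r)))" using l elim t by (intro E4) auto
      then have "r * (1 - exp (- (t * (l * r)))) \<le> r * (t * (1 - exp (- (l * r))))"
        using elim by (intro mult_left_mono) auto
      then show ?case by (simp add: algebra_simps)
    qed
  qed
  also have "\<dots> = t * (\<integral>r. r * (1 - exp (- l * r)) \<partial>\<pi>)" by simp
  finally have i: "(\<integral>r. r * (1 - exp (- (t * l) * r)) \<partial>\<pi>) \<le> t * (\<integral>r. r * (1 - exp (- l * r)) \<partial>\<pi>)" .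
  have "\<alpha> \<le> t * \<alpha>" using al[OF bm] t by (simp add: mult_le_cancel_right1)
  then show ?thesis using i unfolding DD_def by (simp add: algebra_simps)
qed

lemma DD_mono:
  assumes a: "0 \<le> a" and ab: "a \<le> b"
  shows "DD \<alpha> \<beta> \<pi> a \<le> DD \<alpha> \<beta> \<pi> b"
proof -
  have b: "0 \<le> b" using a ab by simp
  have "(\<integral>r. r * (1 - exp (- a * r)) \<partial>\<pi>) \<le> (\<integral>r. r * (1 - exp (- b * r)) \<partial>\<pi>)"
  proof (rule integral_mono_AE)
    show "integrable \<pi> (\<lambda>r. r * (1 - exp (- a * r)))" using intG[OF bm a] .
    show "integrable \<pi> (\<lambda>r. r * (1 - exp (- b * r)))" using intG[OF bm b] .
    show "AE r in \<pi>. r * (1 - exp (- a * r)) \<le> r * (1 - exp (- b * r))"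
      using AE_pos[OF bm]
    proof eventually_elim
      case (elim r)
      have "a * r \<le> b * r" using ab elim by (intro mult_right_mono) auto
      then have "exp (- b * r) \<le> exp (- a * r)" by simp
      then show ?case using elim by (intro mult_left_mono) auto
    qed
  qed
  moreover have "2 * \<beta> * a \<le> 2 * \<beta> * b" using be[OF bm] ab by (intro mult_left_mono) auto
  ultimately show ?thesis unfolding DD_def by simp
qed

lemma DD_strict:
  assumes unbdd: "filterlim (psi_deriv \<alpha> \<beta> \<pi>) at_top at_top"
    and a: "0 \<le> a" and ab: "a < b"
  shows "DD \<alpha> \<beta> \<pi> a < DD \<alpha> \<beta> \<pi> b"
proof (rule ccontr)
  assume "\<not> ?thesis"
  then have le: "DD \<alpha> \<beta> \<pi> b \<le> DD \<alpha> \<beta> \<pi> a" by simp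
  have b: "0 \<le> b" using a ab by simp
  define h where "h r = r * (1 - exp (- b * r)) - r * (1 - exp (- a * r))" for r
  have ia: "integrable \<pi> (\<lambda>r. r * (1 - exp (- a * r)))" using intG[OF bm a] .
  have ib: "integrable \<pi> (\<lambda>r. r * (1 - exp (- b * r)))" using intG[OF bm b] .
  have ih: "integrable \<pi> h" unfolding h_def using ia ib by simp
  have hpos: "h r > 0" if r: "r > 0" for r
  proof -
    have "a * r < b * r" using ab r by simp
    then have "exp (- b * r) < exp (- a * r)" by simp
    then show ?thesis using r unfolding h_def by (simp add: algebra_simps)
  qed
  have AEh: "AE r in \<pi>. 0 \<le> h r" using AE_pos[OF bm] by eventually_elim (use hpos in \<open>auto intro: less_imp_le\<close>)
  have inth: "(\<integral>r. h r \<partial>\<pi>) = (\<integral>r. r * (1 - exp (- b * r)) \<partial>\<pi>) - (\<integral>r. r * (1 - exp (- a * r)) \<partial>\<pi>)"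
    unfolding h_def by (rule Bochner_Integration.integral_diff[OF ib ia])
  have i0: "(\<integral>r. h r \<partial>\<pi>) \<ge> 0" using AEh by (rule integral_nonneg_AE)
  have "DD \<alpha> \<beta> \<pi> b - DD \<alpha> \<beta> \<pi> a = 2 * \<beta> * (b - a) + (\<integral>r. h r \<partial>\<pi>)"
    unfolding inth DD_def by (simp add: algebra_simps)
  moreover have "2 * \<beta> * (b - a) \<ge> 0" using be[OF bm] ab by simp
  ultimately have z: "(\<integral>r. h r \<partial>\<pi>) = 0" and bz: "2 * \<beta> * (b - a) = 0" using le i0 by linarith+
  have b0: "\<beta> = 0" using bz ab by simp
  have "AE r in \<pi>. h r = 0" using integral_nonneg_eq_0_iff_AE[OF ih AEh] z by simp
  then have F: "AE r in \<pi>. False" using AE_pos[OF bm]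
  proof eventually_elim
    case (elim r) then show ?case using hpos[of r] by simp
  qed
  have const: "DD \<alpha> \<beta> \<pi> l = \<alpha>" for l
  proof -
    have "AE r in \<pi>. r * (1 - exp (- l * r)) = 0" using F by eventually_elim simp
    then have "(\<integral>r. r * (1 - exp (- l * r)) \<partial>\<pi>) = 0" by (rule integral_eq_zero_AE)
    then show ?thesis using b0 by (simp add: DD_def)
  qed
  have "eventually (\<lambda>x. \<alpha> + 1 \<le> psi_deriv \<alpha> \<beta> \<pi> x) at_top"
    using unbdd by (simp add: filterlim_at_top)
  then obtain N where N: "\<And>x. x \<ge> N \<Longrightarrow> \<alpha> + 1 \<le> psi_deriv \<alpha> \<beta> \<pi> x"
    by (auto simp: eventually_at_top_linorder)
  have "\<alpha> + 1 \<le> psi_deriv \<alpha> \<beta> \<pi> (max N 0)" by (rule N) simp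
  moreover have "psi_deriv \<alpha> \<beta> \<pi> (max N 0) = \<alpha>" using psi_deriv_eq[of "max N 0"] const by simp
  ultimately show False by simp
qed

end

context
  fixes \<alpha> \<beta> :: real and \<pi> :: "real measure"
  assumes bm: "branching_mech \<alpha> \<beta> \<pi>"
    and unbdd: "filterlim (psi_deriv \<alpha> \<beta> \<pi>) at_top at_top"
begin

lemma psi_cont: "continuous_on {0..} (psi \<alpha> \<beta> \<pi>)"
  unfolding continuous_on_eq_continuous_within
proof (intro ballI)
  fix x :: real assume "x \<in> {0..}"
  then show "continuous (at x within {0..}) (psi \<alpha> \<beta> \<pi>)"
    by (intro DERIV_continuous[OF psi_has_deriv[OF bm]]) simp
qed

lemma DD_pos: "x > 0 \<Longrightarrow> DD \<alpha> \<beta> \<pi> x > 0"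
  using DD_strict[OF bm unbdd, of 0 x] DD0[OF bm] al[OF bm] by simp

lemma psi_deriv_at: "x > 0 \<Longrightarrow> DERIV (psi \<alpha> \<beta> \<pi>) x :> DD \<alpha> \<beta> \<pi> x"
proof -
  assume x: "x > 0"
  have "(psi \<alpha> \<beta> \<pi> has_real_derivative DD \<alpha> \<beta> \<pi> x) (at x within {0<..})"
    by (rule DERIV_subset[OF psi_has_deriv[OF bm]]) (use x in auto)
  then show ?thesis using at_within_open[of x "{0<..}"] x by simp
qed

lemma psi_strict: "0 \<le> a \<Longrightarrow> a < b \<Longrightarrow> psi \<alpha> \<beta> \<pi> a < psi \<alpha> \<beta> \<pi> b"
proof -
  assume a: "0 \<le> a" and ab: "a < b"
  show ?thesis
  proof (rule DERIV_pos_imp_increasing_open[OF ab])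
    fix x assume "a < x" "x < b"
    then have x: "x > 0" using a by simp
    show "\<exists>y. DERIV (psi \<alpha> \<beta> \<pi>) x :> y \<and> 0 < y" using psi_deriv_at[OF x] DD_pos[OF x] by blast
  next
    show "continuous_on {a..b} (psi \<alpha> \<beta> \<pi>)" by (rule continuous_on_subset[OF psi_cont]) (use a in auto)
  qed
qed

lemma psi_conv:
  assumes v: "0 \<le> v" and vw: "v \<le> w"
  shows "psi \<alpha> \<beta> \<pi> v + DD \<alpha> \<beta> \<pi> v * (w - v) \<le> psi \<alpha> \<beta> \<pi> w"
proof -
  define f where "f x = psi \<alpha> \<beta> \<pi> x - DD \<alpha> \<beta> \<pi> v * x" for x
  have "f v \<le> f w"
  proof (rule DERIV_nonneg_imp_increasing_open[OF vw])
    fix x assume "v < x" "x < w"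
    then have x: "x > 0" "v \<le> x" using v by auto
    have "DERIV f x :> DD \<alpha> \<beta> \<pi> x - DD \<alpha> \<beta> \<pi> v * 1" unfolding f_def
      by (auto intro!: derivative_eq_intros psi_deriv_at x)
    moreover have "DD \<alpha> \<beta> \<pi> x - DD \<alpha> \<beta> \<pi> v * 1 \<ge> 0" using DD_mono[OF bm v x(2)] by simp
    ultimately show "\<exists>y. DERIV f x :> y \<and> 0 \<le> y" by blast
  next
    show "continuous_on {v..w} f" unfolding f_def
      by (intro continuous_intros continuous_on_subset[OF psi_cont]) (use v in auto)
  qed
  then show ?thesis by (simp add: f_def algebra_simps)
qed

lemma psi_nonneg: "0 \<le> x \<Longrightarrow> 0 \<le> psi \<alpha> \<beta> \<pi> x"
  using psi_strict[of 0 x] psi0[OF bm] by (cases "x = 0") auto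

lemma psi_inj: "inj_on (psi \<alpha> \<beta> \<pi>) {0..}"
proof (rule inj_onI)
  fix x y assume x: "x \<in> {0..}" and y: "y \<in> {0..}" and e: "psi \<alpha> \<beta> \<pi> x = psi \<alpha> \<beta> \<pi> y"
  show "x = y"
  proof (rule ccontr)
    assume "x \<noteq> y"
    then have "x < y \<or> y < x" by auto
    then show False using psi_strict x y e by fastforce
  qed
qed

lemma psi_surj: "0 \<le> z \<Longrightarrow> z \<in> psi \<alpha> \<beta> \<pi> ` {0..}"
proof -
  assume z: "0 \<le> z"
  define D1 where "D1 = DD \<alpha> \<beta> \<pi> 1"
  have D1: "D1 > 0" using DD_pos[of 1] by (simp add: D1_def)
  define w where "w = 1 + (z + \<bar>psi \<alpha> \<beta> \<pi> 1\<bar>) / D1"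
  have w1: "w \<ge> 1" using D1 z by (simp add: w_def)
  have "psi \<alpha> \<beta> \<pi> 1 + D1 * (w - 1) \<le> psi \<alpha> \<beta> \<pi> w" using psi_conv[of 1 w] w1 by (simp add: D1_def)
  moreover have "D1 * (w - 1) = z + \<bar>psi \<alpha> \<beta> \<pi> 1\<bar>" using D1 by (simp add: w_def)
  ultimately have zw: "z \<le> psi \<alpha> \<beta> \<pi> w" by linarith
  have "\<exists>x. 0 \<le> x \<and> x \<le> w \<and> psi \<alpha> \<beta> \<pi> x = z"
    by (rule IVT') (use z zw w1 psi0[OF bm] in \<open>auto intro: continuous_on_subset[OF psi_cont]\<close>)
  then show ?thesis by force
qed

lemma DD_surj: "\<alpha> \<le> y \<Longrightarrow> y \<in> DD \<alpha> \<beta> \<pi> ` {0..}"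
proof -
  assume y: "\<alpha> \<le> y"
  have "eventually (\<lambda>x. y \<le> psi_deriv \<alpha> \<beta> \<pi> x) at_top"
    using unbdd by (simp add: filterlim_at_top)
  then obtain N where N: "\<And>x. x \<ge> N \<Longrightarrow> y \<le> psi_deriv \<alpha> \<beta> \<pi> x"
    by (auto simp: eventually_at_top_linorder)
  define x0 where "x0 = max N 0"
  have x0: "x0 \<ge> 0" "y \<le> DD \<alpha> \<beta> \<pi> x0"
    using N[of x0] psi_deriv_eq[OF bm, of x0] by (auto simp: x0_def)
  have "\<exists>x. 0 \<le> x \<and> x \<le> x0 \<and> DD \<alpha> \<beta> \<pi> x = y"
    by (rule IVT') (use y x0 DD0[OF bm] in \<open>auto intro: continuous_on_subset[OF DD_cont[OF bm]]\<close>)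
  then show ?thesis by force
qed

lemma psi_deriv_image: "psi_deriv \<alpha> \<beta> \<pi> ` {0..} = DD \<alpha> \<beta> \<pi> ` {0..}"
  by (rule image_cong) (auto simp: psi_deriv_eq[OF bm])

lemma nu_props:
  assumes y: "\<alpha> \<le> y"
  shows "psi_deriv_inv \<alpha> \<beta> \<pi> y \<ge> 0" "DD \<alpha> \<beta> \<pi> (psi_deriv_inv \<alpha> \<beta> \<pi> y) = y"
proof -
  have yi: "y \<in> psi_deriv \<alpha> \<beta> \<pi> ` {0..}" using DD_surj[OF y] psi_deriv_image by simp
  show n: "psi_deriv_inv \<alpha> \<beta> \<pi> y \<ge> 0" unfolding psi_deriv_inv_def using inv_into_into[OF yi] by simp
  have "psi_deriv \<alpha> \<beta> \<pi> (psi_deriv_inv \<alpha> \<beta> \<pi> y) = y" unfolding psi_deriv_inv_def by (rule f_inv_into_f[OF yi])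
  then show "DD \<alpha> \<beta> \<pi> (psi_deriv_inv \<alpha> \<beta> \<pi> y) = y" using psi_deriv_eq[OF bm n] by simp
qed

lemma phi_inv_props:
  assumes y: "\<alpha> \<le> y"
  shows "\<exists>w\<ge>0. DD \<alpha> \<beta> \<pi> w = y \<and> phi_inv \<alpha> \<beta> \<pi> y = psi \<alpha> \<beta> \<pi> w"
proof -
  obtain \<mu> where mu: "\<mu> \<ge> 0" "DD \<alpha> \<beta> \<pi> \<mu> = y" using DD_surj[OF y] by auto
  have "inv_into {0..} (psi \<alpha> \<beta> \<pi>) (psi \<alpha> \<beta> \<pi> \<mu>) = \<mu>"
    by (rule inv_into_f_f[OF psi_inj]) (use mu in simp)
  then have "phi \<alpha> \<beta> \<pi> (psi \<alpha> \<beta> \<pi> \<mu>) = y"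
    unfolding phi_def using psi_deriv_eq[OF bm mu(1)] mu by simp
  moreover have "psi \<alpha> \<beta> \<pi> \<mu> \<in> {0..}" using psi_nonneg[OF mu(1)] by simp
  ultimately have yi: "y \<in> phi \<alpha> \<beta> \<pi> ` {0..}" by force
  define z where "z = phi_inv \<alpha> \<beta> \<pi> y"
  have z: "z \<ge> 0" unfolding z_def phi_inv_def using inv_into_into[OF yi] by simp
  have pz: "phi \<alpha> \<beta> \<pi> z = y" unfolding z_def phi_inv_def by (rule f_inv_into_f[OF yi])
  have zi: "z \<in> psi \<alpha> \<beta> \<pi> ` {0..}" by (rule psi_surj[OF z])
  define w where "w = inv_into {0..} (psi \<alpha> \<beta> \<pi>) z"
  have w: "w \<ge> 0" unfolding w_def using inv_into_into[OF zi] by simp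
  have pw: "psi \<alpha> \<beta> \<pi> w = z" unfolding w_def by (rule f_inv_into_f[OF zi])
  have "DD \<alpha> \<beta> \<pi> w = y" using pz psi_deriv_eq[OF bm w] unfolding phi_def w_def by simp
  then show ?thesis using w pw z_def by auto
qed

end

theorem lemma2p3:
  fixes \<alpha> \<beta> c :: real and \<pi> :: "real measure"
  assumes bm: "branching_mech \<alpha> \<beta> \<pi>"
    and unbdd: "filterlim (psi_deriv \<alpha> \<beta> \<pi>) at_top at_top"
    and c: "c > 0"
  shows "\<exists>rc. 0 < rc \<and> rc < r0 \<alpha> \<and>
           (\<forall>r. 0 < r \<and> r < rc \<longrightarrow>
              gauge \<alpha> \<beta> \<pi> r * psi_deriv_inv \<alpha> \<beta> \<pi> (c / r^2) \<le> 4 * r^2)"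
proof -
  have a0: "\<alpha> \<ge> 0" using al[OF bm] .
  have r0p: "r0 \<alpha> > 0" using a0 by (auto simp: r0_def)
  define rc where "rc = min (exp (- exp (1 + c))) (min (r0 \<alpha> / 2) (sqrt (c / (\<alpha> + 1))))"
  have rcp: "0 < rc" using r0p c a0 by (simp add: rc_def)
  have rcl: "rc < r0 \<alpha>" using r0p by (simp add: rc_def)
  show ?thesis
  proof (intro exI[of _ rc] conjI rcp rcl allI impI)
    fix r :: real assume r: "0 < r \<and> r < rc"
    then have r0: "0 < r" and r1: "r < exp (- exp (1 + c))" and r2: "r < sqrt (c / (\<alpha> + 1))"
      by (auto simp: rc_def)
    define L where "L = ln (ln (1 / r))"
    have "exp (exp (1 + c)) < 1 / r" using r1 r0 by (simp add: exp_minus field_simps)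
    then have "ln (exp (exp (1 + c))) < ln (1 / r)" using r0 by (subst ln_less_cancel_iff) auto
    then have l1: "exp (1 + c) < ln (1 / r)" by simp
    have l1p: "0 < ln (1 / r)" using l1 exp_gt_zero[of "1 + c"] by linarith
    have "ln (exp (1 + c)) < L" unfolding L_def using l1 l1p by (subst ln_less_cancel_iff) auto
    then have L: "1 + c < L" by simp
    have "r^2 < (sqrt (c / (\<alpha> + 1)))^2" using r0 r2 by (intro power_strict_mono) auto
    then have "r^2 < c / (\<alpha> + 1)" using c a0 by simp
    then have "(\<alpha> + 1) * r^2 < c" using a0 by (simp add: field_simps)
    moreover have "(\<alpha> + 1) * r^2 = \<alpha> * r^2 + r^2" by (simp add: algebra_simps)
    moreover have "r^2 > 0" using r0 by simp
    ultimately have "\<alpha> * r^2 \<le> c" by linarith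
    then have y1: "\<alpha> \<le> c / r^2" using r0 by (simp add: field_simps)
    have Lc: "c < L^2"
    proof -
      have "L * 1 < L * L" using L c by (intro mult_strict_left_mono) auto
      then show ?thesis using L by (simp add: power2_eq_square)
    qed
    define y2 where "y2 = ((1 / r) * L)^2"
    have y2e: "y2 = L^2 / r^2" by (simp add: y2_def power_mult_distrib power_divide)
    have "c / r^2 < L^2 / r^2" using Lc r0 by (simp add: divide_strict_right_mono)
    then have y2a: "\<alpha> \<le> y2" using y1 y2e by simp
    define \<nu> where "\<nu> = psi_deriv_inv \<alpha> \<beta> \<pi> (c / r^2)"
    have nu: "\<nu> \<ge> 0" "DD \<alpha> \<beta> \<pi> \<nu> = c / r^2" using nu_props[OF bm unbdd y1] by (auto simp: \<nu>_def)
    obtain w where w: "w \<ge> 0" "DD \<alpha> \<beta> \<pi> w = y2" "phi_inv \<alpha> \<beta> \<pi> y2 = psi \<alpha> \<beta> \<pi> w"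
      using phi_inv_props[OF bm unbdd y2a] by auto
    have gauge: "gauge \<alpha> \<beta> \<pi> r = L / psi \<alpha> \<beta> \<pi> w" using w(3) by (simp add: gauge_def L_def y2_def)
    define t where "t = L^2 / c"
    have t1: "t > 1" using Lc c by (simp add: t_def)
    have "DD \<alpha> \<beta> \<pi> (t * \<nu>) \<le> t * DD \<alpha> \<beta> \<pi> \<nu>" using DD_sub[OF bm nu(1)] t1 by simp
    also have "\<dots> = y2" using nu(2) c r0 by (simp add: t_def y2e)
    finally have le: "DD \<alpha> \<beta> \<pi> (t * \<nu>) \<le> DD \<alpha> \<beta> \<pi> w" using w(2) by simp
    have tw: "t * \<nu> \<le> w"
    proof (rule ccontr)
      assume "\<not> t * \<nu> \<le> w"
      then have "w < t * \<nu>" by simp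
      from DD_strict[OF bm unbdd w(1) this] le show False by simp
    qed
    have "\<nu> \<le> t * \<nu>" using t1 nu(1) by (simp add: mult_le_cancel_right1)
    then have nw: "\<nu> \<le> w" using tw by linarith
    have "psi \<alpha> \<beta> \<pi> \<nu> + DD \<alpha> \<beta> \<pi> \<nu> * (w - \<nu>) \<le> psi \<alpha> \<beta> \<pi> w"
      by (rule psi_conv[OF bm unbdd nu(1) nw])
    moreover have "psi \<alpha> \<beta> \<pi> \<nu> \<ge> 0" using psi_nonneg[OF bm unbdd nu(1)] .
    moreover have "DD \<alpha> \<beta> \<pi> \<nu> * ((t - 1) * \<nu>) \<le> DD \<alpha> \<beta> \<pi> \<nu> * (w - \<nu>)"
      using tw nu c r0 by (intro mult_left_mono) (auto simp: algebra_simps)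
    ultimately have P: "(c / r^2) * ((t - 1) * \<nu>) \<le> psi \<alpha> \<beta> \<pi> w" using nu(2) by simp
    have ee0: "(c / r^2) * (t - 1) = (L^2 - c) / r^2" using c r0 by (simp add: t_def diff_divide_distrib right_diff_distrib)
    have ee: "(c / r^2) * ((t - 1) * \<nu>) = (L^2 - c) * \<nu> / r^2"
      by (simp only: mult.assoc[symmetric] ee0) simp
    show "gauge \<alpha> \<beta> \<pi> r * psi_deriv_inv \<alpha> \<beta> \<pi> (c / r^2) \<le> 4 * r^2"
    proof (cases "\<nu> = 0")
      case True then show ?thesis by (simp add: \<nu>_def[symmetric])
    next
      case False
      then have np: "\<nu> > 0" using nu(1) by simp
      have Q: "(L^2 - c) * \<nu> / r^2 \<le> psi \<alpha> \<beta> \<pi> w" using P unfolding ee .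
      have qp: "(L^2 - c) * \<nu> / r^2 > 0" using Lc np r0 by simp
      then have Pp: "psi \<alpha> \<beta> \<pi> w > 0" using Q by linarith
      have key: "L \<le> 4 * (L^2 - c)"
      proof -
        have "L * (1 + c) < L * L" using L c by (intro mult_strict_left_mono) auto
        then have "L + L * c < L^2" by (simp add: power2_eq_square algebra_simps)
        moreover have "c \<le> L * c" using L c by (simp add: mult_le_cancel_right1)
        moreover have "0 < L" using L c by simp
        moreover have "4 * (L^2 - c) = 4 * L^2 - 4 * c" by simp
        ultimately show ?thesis by linarith
      qed
      have "L * \<nu> \<le> 4 * (L^2 - c) * \<nu>" using key np by (simp add: mult_right_mono)
      also have "\<dots> = 4 * r^2 * ((L^2 - c) * \<nu> / r^2)" using r0 by (simp add: field_simps)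
      also have "\<dots> \<le> 4 * r^2 * psi \<alpha> \<beta> \<pi> w" using Q r0 by (intro mult_left_mono) auto
      finally have "L * \<nu> \<le> 4 * r^2 * psi \<alpha> \<beta> \<pi> w" .
      then have "L / psi \<alpha> \<beta> \<pi> w * \<nu> \<le> 4 * r^2" using Pp by (simp add: field_simps)
      then show ?thesis using gauge by (simp add: \<nu>_def)
    qed
  qed
qed

end
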